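(* Let $c$ be a positive integer and $c/(c+1)\le\vartheta<1$. Let $(Z_t)$ be the random walk of the context with $r=1$. Define the rational function $$\xi(w)=\frac{[(1-\vartheta)(c+1)-1]w^2+[2-(1-\vartheta)(c+1)]w-(1-\vartheta)w^{c+1}-\vartheta}{(1-\vartheta)w^{c+2}-(1-\vartheta)w^{c+1}-w^2+(1+\vartheta)w-\vartheta},\quad w\in(-1,1).$$ Then $\pi(u,c,1,\vartheta)=\xi^{(u)}(0)/u!$ for all $u\in\mathbb{N}$, where $\xi^{(u)}(0)$ is the $u$-th derivative of $\xi$ at $w=0$. Consequently, for the single-agent trust model with prior parameters $\alpha,\beta\in\mathbb{N}$ and $r=1$, $p_{\rm quit}=\pi(u_{\rm crit},c,1,\vartheta)$ with $u_{\rm crit}=\alpha-c\beta+1$.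
   Context: Random walk: for $\vartheta\in(0,1)$ and positive integers $c,r$, let $Z_0=0$ and $Z_t=Z_{t-1}+\Delta_t$ with $\Delta_t$ i.i.d., $\Delta_t=+c$ with probability $1-\vartheta$ and $-r$ with probability $\vartheta$. Define $\pi(u,c,r,\vartheta):=\mathbb{P}(\exists t\ge0: Z_t\ge u)$. Single-agent trust model: $(X_t)$ i.i.d. Bernoulli$(\vartheta)$; $\hat S_t=\sum_{s\le t}X_s\mathbf{1}_{\{A_s=1\}}$, $\hat F_t=\sum_{s\le t}(1-X_s)\mathbf{1}_{\{A_s=1\}}$, $\hat\vartheta_t=\frac{\alpha+\hat S_t}{\alpha+\beta+\hat S_t+\hat F_t}$; $A_t=1$ iff $r\hat\vartheta_n-c(1-\hat\vartheta_n)\ge0$ for all $n\le t-1$; $\tau:=\inf\{t\in\mathbb{N}\cup\{\infty\}: r\hat\vartheta_t-c(1-\hat\vartheta_t)<0\}$; $p_{\rm quit}:=\mathbb{P}(\tau<\infty)$. *)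

theory Defs
  imports "HOL-Analysis.Analysis" "HOL-Probability.Probability"
begin

text \<open>Underlying i.i.d. Bernoulli(theta) sequence: a stream of booleans, entry s (s = 0,1,...)
  is the (s+1)-st variable; True has probability theta.\<close>
definition bern_stream :: "real \<Rightarrow> bool stream measure" where
  "bern_stream \<theta> = stream_space (measure_pmf (bernoulli_pmf \<theta>))"

definition rw_step :: "nat \<Rightarrow> nat \<Rightarrow> bool \<Rightarrow> int" where
  "rw_step c r b = (if b then - int r else int c)"

definition rw_Z :: "nat \<Rightarrow> nat \<Rightarrow> bool stream \<Rightarrow> nat \<Rightarrow> int" where
  "rw_Z c r \<omega> t = (\<Sum>s<t. rw_step c r (\<omega> !! s))"

definition rw_pi :: "int \<Rightarrow> nat \<Rightarrow> nat \<Rightarrow> real \<Rightarrow> real" where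
  "rw_pi u c r \<theta> = measure (bern_stream \<theta>) {\<omega> \<in> space (bern_stream \<theta>). \<exists>t. rw_Z c r \<omega> t \<ge> u}"

text \<open>Single-agent trust model. The pair (S,F) are the counts (hat S_t, hat F_t).\<close>
definition trust_theta :: "nat \<Rightarrow> nat \<Rightarrow> nat \<times> nat \<Rightarrow> real" where
  "trust_theta \<alpha> \<beta> SF = (real \<alpha> + real (fst SF)) / (real \<alpha> + real \<beta> + real (fst SF) + real (snd SF))"

definition trust_ok :: "nat \<Rightarrow> nat \<Rightarrow> nat \<Rightarrow> nat \<Rightarrow> nat \<times> nat \<Rightarrow> bool" where
  "trust_ok c r \<alpha> \<beta> SF \<longleftrightarrow> real r * trust_theta \<alpha> \<beta> SF - real c * (1 - trust_theta \<alpha> \<beta> SF) \<ge> 0"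

text \<open>(hat S_t, hat F_t): at step t+1 the variable X_{t+1} = \<omega> !! t is counted iff
  A_{t+1} = 1, i.e. iff the acceptance condition held at all times n <= t.\<close>
fun trust_counts :: "nat \<Rightarrow> nat \<Rightarrow> nat \<Rightarrow> nat \<Rightarrow> bool stream \<Rightarrow> nat \<Rightarrow> nat \<times> nat" where
  "trust_counts c r \<alpha> \<beta> \<omega> 0 = (0, 0)"
| "trust_counts c r \<alpha> \<beta> \<omega> (Suc t) =
     (if (\<forall>n\<in>{..t}. trust_ok c r \<alpha> \<beta> (trust_counts c r \<alpha> \<beta> \<omega> n))
      then (fst (trust_counts c r \<alpha> \<beta> \<omega> t) + (if \<omega> !! t then 1 else 0),
            snd (trust_counts c r \<alpha> \<beta> \<omega> t) + (if \<omega> !! t then 0 else 1))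
      else trust_counts c r \<alpha> \<beta> \<omega> t)"

definition p_quit :: "nat \<Rightarrow> nat \<Rightarrow> nat \<Rightarrow> nat \<Rightarrow> real \<Rightarrow> real" where
  "p_quit c r \<alpha> \<beta> \<theta> = measure (bern_stream \<theta>)
     {\<omega> \<in> space (bern_stream \<theta>). \<exists>t. \<not> trust_ok c r \<alpha> \<beta> (trust_counts c r \<alpha> \<beta> \<omega> t)}"

definition xi :: "nat \<Rightarrow> real \<Rightarrow> real \<Rightarrow> real" where
  "xi c \<theta> w =
    (((1 - \<theta>) * (real c + 1) - 1) * w^2 + (2 - (1 - \<theta>) * (real c + 1)) * w - (1 - \<theta>) * w^(c+1) - \<theta>) /
    ((1 - \<theta>) * w^(c+2) - (1 - \<theta>) * w^(c+1) - w^2 + (1 + \<theta>) * w - \<theta>)"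

end

theory Submission
  imports Defs "HOL-Analysis.FPS_Convergence"
begin


lemma rw_Z_0[simp]: "rw_Z c r \<omega> 0 = 0"
  by (simp add: rw_Z_def)

lemma rw_Z_Suc_Stream: "rw_Z c r (x ## \<omega>) (Suc t) = rw_step c r x + rw_Z c r \<omega> t"
  unfolding rw_Z_def by (subst sum.lessThan_Suc_shift) simp

lemma rw_Z_Suc: "rw_Z c r \<omega> (Suc t) = rw_Z c r \<omega> t + rw_step c r (\<omega> !! t)"
  unfolding rw_Z_def by simp

lemma meas_rwZ[measurable]:
  "(\<lambda>\<omega>. rw_Z c r \<omega> t) \<in> measurable (stream_space (measure_pmf p)) (count_space UNIV)"
proof -
  have "(\<lambda>\<omega>. rw_Z c r \<omega> t) = (\<lambda>xs. \<Sum>s<t. rw_step c r (xs ! s)) \<circ> stake t"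
    by (auto simp: rw_Z_def)
  also have "\<dots> \<in> measurable (stream_space (count_space UNIV)) (count_space UNIV)"
    by (rule measurable_comp[OF measurable_stake]) simp
  finally show ?thesis by (simp add: measurable_cong_sets[OF sets_stream_space_cong[OF sets_measure_pmf_count_space] refl])
qed

lemma space_bern[simp]: "space (bern_stream \<theta>) = UNIV"
  by (simp add: bern_stream_def space_stream_space)

lemma first_step:
  fixes \<theta> :: real
  assumes th: "0 \<le> \<theta>" "\<theta> \<le> 1"
  assumes P[measurable]: "Measurable.pred (bern_stream \<theta>) P"
  shows "measure (bern_stream \<theta>) {\<omega> \<in> space (bern_stream \<theta>). P \<omega>} =
     \<theta> * measure (bern_stream \<theta>) {\<omega> \<in> space (bern_stream \<theta>). P (True ## \<omega>)} +
     (1 - \<theta>) * measure (bern_stream \<theta>) {\<omega> \<in> space (bern_stream \<theta>). P (False ## \<omega>)}"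
proof -
  interpret S: prob_space "bern_stream \<theta>" unfolding bern_stream_def by (rule prob_space.prob_space_stream_space[OF prob_space_measure_pmf])
  have P'[measurable]: "Measurable.pred (stream_space (measure_pmf (bernoulli_pmf \<theta>))) P"
    using P by (simp add: bern_stream_def)
  have "ennreal (measure (bern_stream \<theta>) {\<omega> \<in> space (bern_stream \<theta>). P \<omega>}) =
     (\<integral>\<^sup>+t. ennreal (measure (bern_stream \<theta>) {\<omega> \<in> space (bern_stream \<theta>). P (t ## \<omega>)}) \<partial>measure_pmf (bernoulli_pmf \<theta>))"
    unfolding bern_stream_def by (rule prob_space.prob_stream_space[OF prob_space_measure_pmf]) measurable
  also have "\<dots> = ennreal \<theta> * ennreal (measure (bern_stream \<theta>) {\<omega> \<in> space (bern_stream \<theta>). P (True ## \<omega>)}) +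
      ennreal (1 - \<theta>) * ennreal (measure (bern_stream \<theta>) {\<omega> \<in> space (bern_stream \<theta>). P (False ## \<omega>)})"
    using th by (simp add: nn_integral_measure_pmf nn_integral_count_space_finite UNIV_bool add.commute)
  also have "\<dots> = ennreal (\<theta> * measure (bern_stream \<theta>) {\<omega> \<in> space (bern_stream \<theta>). P (True ## \<omega>)} +
     (1 - \<theta>) * measure (bern_stream \<theta>) {\<omega> \<in> space (bern_stream \<theta>). P (False ## \<omega>)})"
    using th by (simp add: ennreal_mult ennreal_plus)
  finally show ?thesis using th by (subst (asm) ennreal_inj) auto
qed

lemma meas_rwZ_bern[measurable]:
  "(\<lambda>\<omega>. rw_Z c r \<omega> t) \<in> measurable (bern_stream \<theta>) (count_space UNIV)"
  unfolding bern_stream_def by (rule meas_rwZ)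

lemma ex_nat_split: "(\<exists>t::nat. Q t) = (Q 0 \<or> (\<exists>t. Q (Suc t)))"
  by (metis old.nat.exhaust)

lemma ex_nat_le_split: "(\<exists>t::nat\<le>Suc n. Q t) = (Q 0 \<or> (\<exists>t\<le>n. Q (Suc t)))"
  by (metis Suc_le_mono le0 old.nat.exhaust)

definition pN :: "nat \<Rightarrow> real \<Rightarrow> nat \<Rightarrow> int \<Rightarrow> real" where
  "pN c \<theta> n u = measure (bern_stream \<theta>) {\<omega> \<in> space (bern_stream \<theta>). \<exists>t\<le>n. u \<le> rw_Z c 1 \<omega> t}"

lemma prob_bern: "prob_space (bern_stream \<theta>)"
  unfolding bern_stream_def by (rule prob_space.prob_space_stream_space[OF prob_space_measure_pmf])

lemma rw_pi_le0: "u \<le> 0 \<Longrightarrow> rw_pi u c 1 \<theta> = 1"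
proof -
  assume "u \<le> 0"
  then have "{\<omega> \<in> space (bern_stream \<theta>). \<exists>t. u \<le> rw_Z c 1 \<omega> t} = space (bern_stream \<theta>)"
    by (auto intro!: exI[of _ 0])
  then show ?thesis unfolding rw_pi_def using prob_space.prob_space[OF prob_bern] by simp
qed

lemma pN_le0: "u \<le> 0 \<Longrightarrow> pN c \<theta> n u = 1"
proof -
  assume "u \<le> 0"
  then have "{\<omega> \<in> space (bern_stream \<theta>). \<exists>t\<le>n. u \<le> rw_Z c 1 \<omega> t} = space (bern_stream \<theta>)"
    by (auto intro!: exI[of _ 0])
  then show ?thesis unfolding pN_def using prob_space.prob_space[OF prob_bern] by simp
qed

lemma pN_0: "u \<ge> 1 \<Longrightarrow> pN c \<theta> 0 u = 0"
  unfolding pN_def by simp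

lemma rw_pi_bounds: "0 \<le> rw_pi u c 1 \<theta>" "rw_pi u c 1 \<theta> \<le> 1"
  unfolding rw_pi_def using prob_space.prob_le_1[OF prob_bern] by auto

lemma pN_bounds: "0 \<le> pN c \<theta> n u" "pN c \<theta> n u \<le> 1"
  unfolding pN_def using prob_space.prob_le_1[OF prob_bern] by auto

lemma rw_pi_rec:
  assumes th: "0 \<le> \<theta>" "\<theta> \<le> 1" and u: "u \<ge> 1"
  shows "rw_pi u c 1 \<theta> = \<theta> * rw_pi (u + 1) c 1 \<theta> + (1 - \<theta>) * rw_pi (u - int c) c 1 \<theta>"
proof -
  have "rw_pi u c 1 \<theta> = \<theta> * measure (bern_stream \<theta>) {\<omega> \<in> space (bern_stream \<theta>). \<exists>t. u \<le> rw_Z c 1 (True ## \<omega>) t} +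
     (1 - \<theta>) * measure (bern_stream \<theta>) {\<omega> \<in> space (bern_stream \<theta>). \<exists>t. u \<le> rw_Z c 1 (False ## \<omega>) t}"
    unfolding rw_pi_def by (rule first_step[OF th]) measurable
  also have "{\<omega> \<in> space (bern_stream \<theta>). \<exists>t. u \<le> rw_Z c 1 (True ## \<omega>) t} =
       {\<omega> \<in> space (bern_stream \<theta>). \<exists>t. u + 1 \<le> rw_Z c 1 \<omega> t}"
    using u by (subst ex_nat_split) (auto simp: rw_Z_Suc_Stream rw_step_def add1_zle_eq[symmetric] diff_le_eq add.commute)
  also have "{\<omega> \<in> space (bern_stream \<theta>). \<exists>t. u \<le> rw_Z c 1 (False ## \<omega>) t} =
       {\<omega> \<in> space (bern_stream \<theta>). \<exists>t. u - int c \<le> rw_Z c 1 \<omega> t}"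
    using u by (subst ex_nat_split) (auto simp: rw_Z_Suc_Stream rw_step_def add1_zle_eq[symmetric] diff_le_eq add.commute)
  finally show ?thesis unfolding rw_pi_def .
qed

lemma pN_rec:
  assumes th: "0 \<le> \<theta>" "\<theta> \<le> 1" and u: "u \<ge> 1"
  shows "pN c \<theta> (Suc n) u = \<theta> * pN c \<theta> n (u + 1) + (1 - \<theta>) * pN c \<theta> n (u - int c)"
proof -
  have "pN c \<theta> (Suc n) u = \<theta> * measure (bern_stream \<theta>) {\<omega> \<in> space (bern_stream \<theta>). \<exists>t\<le>Suc n. u \<le> rw_Z c 1 (True ## \<omega>) t} +
     (1 - \<theta>) * measure (bern_stream \<theta>) {\<omega> \<in> space (bern_stream \<theta>). \<exists>t\<le>Suc n. u \<le> rw_Z c 1 (False ## \<omega>) t}"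
    unfolding pN_def by (rule first_step[OF th]) measurable
  also have "{\<omega> \<in> space (bern_stream \<theta>). \<exists>t\<le>Suc n. u \<le> rw_Z c 1 (True ## \<omega>) t} =
       {\<omega> \<in> space (bern_stream \<theta>). \<exists>t\<le>n. u + 1 \<le> rw_Z c 1 \<omega> t}"
    using u by (subst ex_nat_le_split) (auto simp: rw_Z_Suc_Stream rw_step_def add1_zle_eq[symmetric] diff_le_eq add.commute)
  also have "{\<omega> \<in> space (bern_stream \<theta>). \<exists>t\<le>Suc n. u \<le> rw_Z c 1 (False ## \<omega>) t} =
       {\<omega> \<in> space (bern_stream \<theta>). \<exists>t\<le>n. u - int c \<le> rw_Z c 1 \<omega> t}"
    using u by (subst ex_nat_le_split) (auto simp: rw_Z_Suc_Stream rw_step_def add1_zle_eq[symmetric] diff_le_eq add.commute)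
  finally show ?thesis unfolding pN_def .
qed

lemma pN_lim: "(\<lambda>n. pN c \<theta> n u) \<longlonglongrightarrow> rw_pi u c 1 \<theta>"
proof -
  interpret S: prob_space "bern_stream \<theta>" by (rule prob_bern)
  let ?A = "\<lambda>n. {\<omega> \<in> space (bern_stream \<theta>). \<exists>t\<le>n. u \<le> rw_Z c 1 \<omega> t}"
  have "(\<lambda>n. measure (bern_stream \<theta>) (?A n)) \<longlonglongrightarrow> measure (bern_stream \<theta>) (\<Union>n. ?A n)"
  proof (rule S.finite_Lim_measure_incseq)
    have "?A n \<in> S.events" for n by measurable
    then show "range ?A \<subseteq> S.events" by auto
    show "incseq ?A" unfolding incseq_def by (auto intro: le_trans)
  qed
  also have "(\<Union>n. ?A n) = {\<omega> \<in> space (bern_stream \<theta>). \<exists>t. u \<le> rw_Z c 1 \<omega> t}" by auto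
  finally show ?thesis unfolding pN_def rw_pi_def .
qed

lemma minimality:
  assumes th: "0 \<le> \<theta>" "\<theta> \<le> 1"
    and nn: "\<And>u. 0 \<le> f u" and one: "\<And>u. u \<le> 0 \<Longrightarrow> f u = 1"
    and rec: "\<And>u. u \<ge> 1 \<Longrightarrow> f u = \<theta> * f (u + 1) + (1 - \<theta>) * f (u - int c)"
  shows "rw_pi u c 1 \<theta> \<le> f u"
proof -
  have "\<forall>u. pN c \<theta> n u \<le> f u" for n
  proof (induction n)
    case 0
    show ?case
    proof
      fix u show "pN c \<theta> 0 u \<le> f u"
      proof (cases "u \<le> 0")
        case True then show ?thesis using pN_le0[OF True] one[OF True] by simp
      next
        case False then have "pN c \<theta> 0 u = 0" by (intro pN_0) simp
        then show ?thesis using nn[of u] by simp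
      qed
    qed
  next
    case (Suc n)
    show ?case
    proof
      fix u
      show "pN c \<theta> (Suc n) u \<le> f u"
      proof (cases "u \<le> 0")
        case True then show ?thesis by (simp add: pN_le0 one)
      next
        case False
        then have "pN c \<theta> (Suc n) u = \<theta> * pN c \<theta> n (u + 1) + (1 - \<theta>) * pN c \<theta> n (u - int c)"
          using pN_rec[OF th] by simp
        also have "\<dots> \<le> \<theta> * f (u + 1) + (1 - \<theta>) * f (u - int c)"
          using Suc.IH th by (intro add_mono mult_left_mono) auto
        also have "\<dots> = f u" using rec[of u] False by simp
        finally show ?thesis .
      qed
    qed
  qed
  then show ?thesis by (intro LIMSEQ_le_const2[OF pN_lim]) blast
qed



lemma trust_ok_iff:
  assumes "\<alpha> > 0"
  shows "trust_ok c 1 \<alpha> \<beta> SF \<longleftrightarrow> real \<alpha> + real (fst SF) - real c * (real \<beta> + real (snd SF)) \<ge> 0"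
proof -
  define d where "d = real \<alpha> + real \<beta> + real (fst SF) + real (snd SF)"
  have d: "d > 0" using assms by (simp add: d_def)
  have e: "trust_theta \<alpha> \<beta> SF = (real \<alpha> + real (fst SF)) / d" by (simp add: trust_theta_def d_def)
  have "real 1 * trust_theta \<alpha> \<beta> SF - real c * (1 - trust_theta \<alpha> \<beta> SF)
     = (real \<alpha> + real (fst SF)) / d - real c * (1 - (real \<alpha> + real (fst SF)) / d)"
    by (simp only: e)
  also have "\<dots> = (real \<alpha> + real (fst SF) - real c * (real \<beta> + real (snd SF))) / d"
  proof -
    have dd: "d - (real \<alpha> + real (fst SF)) = real \<beta> + real (snd SF)" by (simp add: d_def)
    have "1 - (real \<alpha> + real (fst SF)) / d = (d - (real \<alpha> + real (fst SF))) / d"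
      using d by (simp add: diff_divide_distrib)
    also have "\<dots> = (real \<beta> + real (snd SF)) / d" by (simp only: dd)
    finally show ?thesis by (simp add: diff_divide_distrib)
  qed
  finally have "real 1 * trust_theta \<alpha> \<beta> SF - real c * (1 - trust_theta \<alpha> \<beta> SF)
     = (real \<alpha> + real (fst SF) - real c * (real \<beta> + real (snd SF))) / d" .
  then show ?thesis unfolding trust_ok_def using d by (simp add: divide_nonneg_pos zero_le_divide_iff)
qed

lemma counts_exact:
  assumes "\<alpha> > 0"
  shows "(\<forall>n<t. trust_ok c 1 \<alpha> \<beta> (trust_counts c 1 \<alpha> \<beta> \<omega> n)) \<Longrightarrow>
    real \<alpha> + real (fst (trust_counts c 1 \<alpha> \<beta> \<omega> t)) - real c * (real \<beta> + real (snd (trust_counts c 1 \<alpha> \<beta> \<omega> t)))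
    = real \<alpha> - real c * real \<beta> - real_of_int (rw_Z c 1 \<omega> t)"
proof (induction t)
  case 0
  then show ?case by (simp add: rw_Z_def)
next
  case (Suc t)
  have all: "\<forall>n\<in>{..t}. trust_ok c 1 \<alpha> \<beta> (trust_counts c 1 \<alpha> \<beta> \<omega> n)"
    using Suc.prems by auto
  have IH: "real \<alpha> + real (fst (trust_counts c 1 \<alpha> \<beta> \<omega> t)) - real c * (real \<beta> + real (snd (trust_counts c 1 \<alpha> \<beta> \<omega> t)))
    = real \<alpha> - real c * real \<beta> - real_of_int (rw_Z c 1 \<omega> t)"
    using Suc by auto
  show ?case
    using IH all by (simp add: rw_Z_def rw_step_def algebra_simps split: if_splits)
qed

lemma quit_iff:
  assumes "\<alpha> > 0"
  shows "(\<exists>t. \<not> trust_ok c 1 \<alpha> \<beta> (trust_counts c 1 \<alpha> \<beta> \<omega> t)) \<longleftrightarrow>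
         (\<exists>t. int \<alpha> - int c * int \<beta> + 1 \<le> rw_Z c 1 \<omega> t)"
proof
  assume "\<exists>t. \<not> trust_ok c 1 \<alpha> \<beta> (trust_counts c 1 \<alpha> \<beta> \<omega> t)"
  then obtain t where t: "\<not> trust_ok c 1 \<alpha> \<beta> (trust_counts c 1 \<alpha> \<beta> \<omega> t)"
    and min: "\<forall>n<t. trust_ok c 1 \<alpha> \<beta> (trust_counts c 1 \<alpha> \<beta> \<omega> n)"
    using exists_least_iff[of "\<lambda>t. \<not> trust_ok c 1 \<alpha> \<beta> (trust_counts c 1 \<alpha> \<beta> \<omega> t)"] by blast
  have "real \<alpha> - real c * real \<beta> - real_of_int (rw_Z c 1 \<omega> t) < 0"
    using counts_exact[OF assms min] t trust_ok_iff[OF assms] by auto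
  then have "real_of_int (int \<alpha> - int c * int \<beta>) < real_of_int (rw_Z c 1 \<omega> t)" by simp
  then have "int \<alpha> - int c * int \<beta> < rw_Z c 1 \<omega> t" by (simp only: of_int_less_iff)
  then have "int \<alpha> - int c * int \<beta> + 1 \<le> rw_Z c 1 \<omega> t" by linarith
  then show "\<exists>t. int \<alpha> - int c * int \<beta> + 1 \<le> rw_Z c 1 \<omega> t" by blast
next
  assume "\<exists>t. int \<alpha> - int c * int \<beta> + 1 \<le> rw_Z c 1 \<omega> t"
  then obtain t where t: "int \<alpha> - int c * int \<beta> + 1 \<le> rw_Z c 1 \<omega> t" by blast
  show "\<exists>t. \<not> trust_ok c 1 \<alpha> \<beta> (trust_counts c 1 \<alpha> \<beta> \<omega> t)"
  proof (cases "\<forall>n<t. trust_ok c 1 \<alpha> \<beta> (trust_counts c 1 \<alpha> \<beta> \<omega> n)")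
    case True
    have "real_of_int (int \<alpha> - int c * int \<beta> + 1) \<le> real_of_int (rw_Z c 1 \<omega> t)"
      using t by (simp only: of_int_le_iff)
    then have "real \<alpha> - real c * real \<beta> - real_of_int (rw_Z c 1 \<omega> t) < 0" by simp
    then have "\<not> trust_ok c 1 \<alpha> \<beta> (trust_counts c 1 \<alpha> \<beta> \<omega> t)"
      using counts_exact[OF assms True] trust_ok_iff[OF assms] by auto
    then show ?thesis by blast
  next
    case False then show ?thesis by blast
  qed
qed

lemma part2:
  assumes "\<alpha> > 0"
  shows "p_quit c 1 \<alpha> \<beta> \<theta> = rw_pi (int \<alpha> - int c * int \<beta> + 1) c 1 \<theta>"
  unfolding p_quit_def rw_pi_def using quit_iff[OF assms] by simp



fun phi :: "nat \<Rightarrow> real \<Rightarrow> nat \<Rightarrow> real" where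
  "phi c \<theta> 0 = 1"
| "phi c \<theta> (Suc 0) = real c * (1 - \<theta>) / \<theta>"
| "phi c \<theta> (Suc (Suc n)) = (phi c \<theta> (Suc n) - (1 - \<theta>) * (if n + 1 < c then 1 else phi c \<theta> (n + 1 - c))) / \<theta>"

definition Phi :: "nat \<Rightarrow> real \<Rightarrow> int \<Rightarrow> real" where
  "Phi c \<theta> u = (if u < 0 then 1 else phi c \<theta> (nat u))"

lemma Phi_le0: "u \<le> 0 \<Longrightarrow> Phi c \<theta> u = 1"
  by (auto simp: Phi_def)

lemma Phi_nat: "Phi c \<theta> (int n) = phi c \<theta> n"
  by (simp add: Phi_def)

lemma Phi_rec:
  assumes "\<theta> > 0" "u \<ge> 1"
  shows "Phi c \<theta> u = \<theta> * Phi c \<theta> (u + 1) + (1 - \<theta>) * Phi c \<theta> (u - int c)"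
proof -
  obtain n where n: "u = int n + 1" using assms(2)
    by (metis add.commute zero_le_imp_eq_int le_add_diff_inverse zle_diff1_eq diff_ge_0_iff_ge)
  have e1: "Phi c \<theta> (u + 1) = phi c \<theta> (Suc (Suc n))" using n
    by (metis Phi_nat add.commute add_2_eq_Suc' of_nat_Suc one_add_one add.assoc)
  have e2: "Phi c \<theta> u = phi c \<theta> (Suc n)" using n by (metis Phi_nat of_nat_Suc add.commute)
  have e3: "Phi c \<theta> (u - int c) = (if n + 1 < c then 1 else phi c \<theta> (n + 1 - c))"
  proof (cases "n + 1 < c")
    case True then show ?thesis using n by (simp add: Phi_def)
  next
    case False
    then have "u - int c = int (n + 1 - c)" using n by simp
    then have "Phi c \<theta> (u - int c) = phi c \<theta> (n + 1 - c)" by (simp only: Phi_nat)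
    then show ?thesis using False by simp
  qed
  show ?thesis using assms(1) unfolding e1 e2 e3 by (simp only: phi.simps) (simp add: field_simps)
qed

lemma Q_const:
  fixes f :: "int \<Rightarrow> real"
  assumes c: "c > 0"
    and rec: "\<And>u. u \<ge> 1 \<Longrightarrow> f u = \<theta> * f (u + 1) + (1 - \<theta>) * f (u - int c)"
  shows "\<theta> * f (int k + 1) - (1 - \<theta>) * (\<Sum>j<c. f (int k - int j)) = \<theta> * f 1 - (1 - \<theta>) * (\<Sum>j<c. f (- int j))"
proof (induction k)
  case 0
  then show ?case by simp
next
  case (Suc k)
  obtain m where m: "c = Suc m" using c by (cases c) auto
  define a where "a = int k"
  define T where "T = (\<Sum>j<m. f (a - int j))"
  define R where "R = \<theta> * f 1 - (1 - \<theta>) * (\<Sum>j<c. f (- int j))"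
  have s1: "(\<Sum>j<c. f (int (Suc k) - int j)) = f (a + 1) + T"
    unfolding m T_def a_def by (subst sum.lessThan_Suc_shift) (simp add: algebra_simps)
  have s2: "(\<Sum>j<c. f (int k - int j)) = T + f (a - int m)"
    unfolding m T_def a_def by simp
  have "f (a + 1) = \<theta> * f (a + 1 + 1) + (1 - \<theta>) * f (a + 1 - int c)"
    by (rule rec) (simp add: a_def)
  moreover have "a + 1 - int c = a - int m" using m by simp
  ultimately have r: "f (a + 1) = \<theta> * f (a + 1 + 1) + (1 - \<theta>) * f (a - int m)" by simp
  have IH: "\<theta> * f (a + 1) - (1 - \<theta>) * (T + f (a - int m)) = R"
    using Suc.IH s2 unfolding R_def a_def by simp
  have L: "\<theta> * f (a + 1 + 1) - (1 - \<theta>) * (f (a + 1) + T) =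
    (\<theta> * f (a + 1) - (1 - \<theta>) * (T + f (a - int m))) + (\<theta> * f (a + 1 + 1) + (1 - \<theta>) * f (a - int m) - f (a + 1))"
    by (simp add: algebra_simps)
  have "int (Suc k) + 1 = a + 1 + 1" by (simp add: a_def)
  then show ?case unfolding s1 using L IH r R_def by simp
qed


lemma sum_init:
  assumes "\<And>u. u \<le> 0 \<Longrightarrow> f u = (1::real)"
  shows "(\<Sum>j<c. f (- int j)) = real c"
  using assms by simp

lemma Phi_1: "Phi c \<theta> 1 = real c * (1 - \<theta>) / \<theta>"
  using Phi_nat[of c \<theta> 1] by simp

lemma Phi_renewal:
  assumes c: "c > 0" and th: "\<theta> > 0"
  shows "\<theta> * Phi c \<theta> (int k + 1) = (1 - \<theta>) * (\<Sum>j<c. Phi c \<theta> (int k - int j))"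
proof -
  have "\<theta> * Phi c \<theta> (int k + 1) - (1 - \<theta>) * (\<Sum>j<c. Phi c \<theta> (int k - int j))
     = \<theta> * Phi c \<theta> 1 - (1 - \<theta>) * (\<Sum>j<c. Phi c \<theta> (- int j))"
    by (rule Q_const[OF c]) (rule Phi_rec[OF th])
  also have "\<dots> = 0" using th by (simp add: sum_init Phi_le0 Phi_1)
  finally show ?thesis by simp
qed

lemma Phi_nonneg:
  assumes c: "c > 0" and th: "\<theta> > 0" "\<theta> < 1"
  shows "Phi c \<theta> u \<ge> 0"
proof -
  have "\<forall>u. u \<le> int k \<longrightarrow> Phi c \<theta> u \<ge> 0" for k
  proof (induction k)
    case 0 then show ?case by (simp add: Phi_le0)
  next
    case (Suc k)
    show ?case
    proof (intro allI impI)
      fix u assume u: "u \<le> int (Suc k)"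
      show "Phi c \<theta> u \<ge> 0"
      proof (cases "u \<le> int k")
        case True then show ?thesis using Suc.IH by blast
      next
        case False
        then have u': "u = int k + 1" using u by simp
        have "(\<Sum>j<c. Phi c \<theta> (int k - int j)) \<ge> 0"
          using Suc.IH by (intro sum_nonneg) auto
        then have "\<theta> * Phi c \<theta> (int k + 1) \<ge> 0"
          using Phi_renewal[OF c th(1), of k] th by simp
        then show ?thesis using u' th by (simp add: zero_le_mult_iff)
      qed
    qed
  qed
  then show ?thesis by (metis nle_le zero_le_imp_eq_int le_refl Phi_le0 order.refl
      linorder_not_le order_less_imp_le zle_int)
qed

lemma uniqueness:
  fixes f :: "int \<Rightarrow> real"
  assumes c: "c > 0" and th: "\<theta> > 0" "\<theta> < 1" and drift: "(1 - \<theta>) * real c \<le> \<theta>"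
    and nn: "\<And>u. 0 \<le> f u" and le1: "\<And>u. f u \<le> 1" and one: "\<And>u. u \<le> 0 \<Longrightarrow> f u = 1"
    and rec: "\<And>u. u \<ge> 1 \<Longrightarrow> f u = \<theta> * f (u + 1) + (1 - \<theta>) * f (u - int c)"
    and f1: "f 1 \<le> Phi c \<theta> 1"
  shows "f u = Phi c \<theta> u"
proof -
  define K where "K = \<theta> * f 1 - (1 - \<theta>) * real c"
  have Q: "\<theta> * f (int k + 1) = K + (1 - \<theta>) * (\<Sum>j<c. f (int k - int j))" for k
    using Q_const[OF c rec, of k] sum_init[of f c] one unfolding K_def by simp
  have Kle: "K \<le> 0" using f1 th unfolding K_def Phi_1 by (simp add: field_simps)
  have K0: "K = 0"
  proof (rule ccontr)
    assume "K \<noteq> 0"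
    with Kle have Kneg: "K < 0" by simp
    define \<delta> where "\<delta> = - K / \<theta>"
    have \<delta>: "\<delta> > 0" using Kneg th by (simp add: \<delta>_def divide_neg_pos)
    have claim: "\<forall>u. (n = 0 \<or> int (n * c) + 1 \<le> u) \<longrightarrow> f u \<le> 1 - real n * \<delta>" for n
    proof (induction n)
      case 0 then show ?case using le1 by simp
    next
      case (Suc n)
      show ?case
      proof (intro allI impI)
        fix u assume "Suc n = 0 \<or> int (Suc n * c) + 1 \<le> u"
        then have u: "int (Suc n * c) + 1 \<le> u" by simp
        define k where "k = nat (u - 1)"
        have "0 \<le> int (Suc n * c)" by simp
        then have "u \<ge> 1" using u by linarith
        then have uk: "u = int k + 1" unfolding k_def by simp
        have kb: "int (Suc n * c) \<le> int k" using u uk by simp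
        define B where "B = 1 - real n * \<delta>"
        have win: "f (int k - int j) \<le> B" if "j < c" for j
        proof -
          have "int (n * c) + 1 \<le> int k - int j" using kb that by (simp add: algebra_simps)
          then show ?thesis using Suc.IH unfolding B_def by blast
        qed
        have B0: "B \<ge> 0" using win[of 0] nn[of "int k - 0"] c by simp
        have "(\<Sum>j<c. f (int k - int j)) \<le> real c * B"
          using sum_mono[of "{..<c}" "\<lambda>j. f (int k - int j)" "\<lambda>_. B"] win by simp
        then have "\<theta> * f u \<le> K + (1 - \<theta>) * (real c * B)"
          using Q[of k] uk th by (simp add: mult_left_mono)
        also have "\<dots> \<le> K + \<theta> * B"
          using drift B0 by (simp add: mult_right_mono mult.assoc[symmetric])
        finally have "\<theta> * f u \<le> \<theta> * (B - \<delta>)" using th by (simp add: \<delta>_def algebra_simps)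
        then have "f u \<le> B - \<delta>" using th by simp
        then show "f u \<le> 1 - real (Suc n) * \<delta>" unfolding B_def by (simp add: algebra_simps)
      qed
    qed
    obtain n where n: "1 < real n * \<delta>" using \<delta> reals_Archimedean3 by blast
    have "f (int (n * c) + 1) \<le> 1 - real n * \<delta>" using claim[of n] by simp
    then show False using n nn[of "int (n * c) + 1"] by simp
  qed
  have ren: "\<theta> * f (int k + 1) = (1 - \<theta>) * (\<Sum>j<c. f (int k - int j))" for k
    using Q[of k] K0 by simp
  have "\<forall>u. u \<le> int k \<longrightarrow> f u = Phi c \<theta> u" for k
  proof (induction k)
    case 0 then show ?case by (simp add: one Phi_le0)
  next
    case (Suc k)
    show ?case
    proof (intro allI impI)
      fix u assume u: "u \<le> int (Suc k)"
      show "f u = Phi c \<theta> u"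
      proof (cases "u \<le> int k")
        case True then show ?thesis using Suc.IH by blast
      next
        case False
        then have u': "u = int k + 1" using u by simp
        have "(\<Sum>j<c. f (int k - int j)) = (\<Sum>j<c. Phi c \<theta> (int k - int j))"
          using Suc.IH by (intro sum.cong) auto
        then have "\<theta> * f (int k + 1) = \<theta> * Phi c \<theta> (int k + 1)"
          using ren[of k] Phi_renewal[OF c th(1), of k] by simp
        then show ?thesis using u' th by simp
      qed
    qed
  qed
  then show ?thesis
    by (metis le_refl Phi_le0 one nat_0_le linorder_not_le order_less_imp_le)
qed



theorem fps_nth_conv_deriv_real:
  fixes f :: "real fps"
  assumes "fps_conv_radius f > 0"
  shows   "fps_nth f n = (deriv ^^ n) (eval_fps f) 0 / fact n"
  using assms
proof (induction n arbitrary: f)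
  case 0
  thus ?case by (simp add: eval_fps_def)
next
  case (Suc n f)
  have "(deriv ^^ Suc n) (eval_fps f) 0 = (deriv ^^ n) (deriv (eval_fps f)) 0"
    unfolding funpow_Suc_right o_def ..
  also have "eventually (\<lambda>z::real. z \<in> eball 0 (fps_conv_radius f)) (nhds 0)"
    using Suc.prems by (intro eventually_nhds_in_open) (auto simp: zero_ereal_def)
  hence "eventually (\<lambda>z. deriv (eval_fps f) z = eval_fps (fps_deriv f) z) (nhds 0)"
    by eventually_elim (simp add: eval_fps_deriv)
  hence "(deriv ^^ n) (deriv (eval_fps f)) 0 = (deriv ^^ n) (eval_fps (fps_deriv f)) 0"
    by (intro higher_deriv_cong_ev refl)
  also have "\<dots> / fact n = fps_nth (fps_deriv f) n"
    using Suc.prems fps_conv_radius_deriv[of f]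
    by (intro Suc.IH [symmetric]) auto
  also have "\<dots> / of_nat (Suc n) = fps_nth f (Suc n)"
    by (simp add: fps_deriv_def del: of_nat_Suc)
  finally show ?case by (simp add: field_split_simps)
qed

lemma fps_nth_fps_expansion_real:
  fixes f :: "real \<Rightarrow> real"
  assumes "f has_fps_expansion F"
  shows   "fps_nth F n = (deriv ^^ n) f 0 / fact n"
proof -
  have "fps_nth F n = (deriv ^^ n) (eval_fps F) 0 / fact n"
    using assms by (intro fps_nth_conv_deriv_real) (auto simp: has_fps_expansion_def)
  also have "(deriv ^^ n) (eval_fps F) 0 = (deriv ^^ n) f 0"
    using assms by (intro higher_deriv_cong_ev) (auto simp: has_fps_expansion_def)
  finally show ?thesis .
qed

definition Nf :: "nat \<Rightarrow> real \<Rightarrow> real fps" where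
  "Nf c \<theta> = fps_const ((1 - \<theta>) * (real c + 1) - 1) * fps_X^2 + fps_const (2 - (1 - \<theta>) * (real c + 1)) * fps_X
     - fps_const (1 - \<theta>) * fps_X^(c+1) - fps_const \<theta>"

definition Df :: "nat \<Rightarrow> real \<Rightarrow> real fps" where
  "Df c \<theta> = fps_const (1 - \<theta>) * fps_X^(c+2) - fps_const (1 - \<theta>) * fps_X^(c+1) - fps_X^2
     + fps_const (1 + \<theta>) * fps_X - fps_const \<theta>"

lemma N_exp: "(\<lambda>w::real. ((1 - \<theta>) * (real c + 1) - 1) * w^2 + (2 - (1 - \<theta>) * (real c + 1)) * w - (1 - \<theta>) * w^(c+1) - \<theta>)
   has_fps_expansion Nf c \<theta>"
  unfolding Nf_def by (intro fps_expansion_intros)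

lemma D_exp: "(\<lambda>w::real. (1 - \<theta>) * w^(c+2) - (1 - \<theta>) * w^(c+1) - w^2 + (1 + \<theta>) * w - \<theta>)
   has_fps_expansion Df c \<theta>"
  unfolding Df_def by (intro fps_expansion_intros)


lemma coeff_id:
  assumes c: "c > 0" and th: "\<theta> > 0"
  shows "Abs_fps (phi c \<theta>) * Df c \<theta> = Nf c \<theta>"
proof (rule fps_ext)
  fix n
  define A where "A = Abs_fps (phi c \<theta>)"
  have e: "A * Df c \<theta> = fps_const (1-\<theta>) * (A * fps_X^(c+2)) - fps_const (1-\<theta>) * (A * fps_X^(c+1))
     - A * fps_X^2 + fps_const (1+\<theta>) * (A * fps_X) - fps_const \<theta> * A"
    by (simp add: Df_def algebra_simps)
  have L: "fps_nth (A * Df c \<theta>) n = (1-\<theta>) * (if n < c+2 then 0 else phi c \<theta> (n-(c+2)))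
     - (1-\<theta>) * (if n < c+1 then 0 else phi c \<theta> (n-(c+1)))
     - (if n < 2 then 0 else phi c \<theta> (n-2)) + (1+\<theta>) * (if n = 0 then 0 else phi c \<theta> (n-1))
     - \<theta> * phi c \<theta> n"
    unfolding e by (simp add: fps_X_power_mult_right_nth A_def del: power_Suc)
  have R: "fps_nth (Nf c \<theta>) n = ((1 - \<theta>) * (real c + 1) - 1) * (if n = 2 then 1 else 0)
     + (2 - (1 - \<theta>) * (real c + 1)) * (if n = 1 then 1 else 0)
     - (1 - \<theta>) * (if n = c + 1 then 1 else 0) - (if n = 0 then \<theta> else 0)"
    by (simp add: Nf_def) arith
  have "(1-\<theta>) * (if n < c+2 then 0 else phi c \<theta> (n-(c+2)))
     - (1-\<theta>) * (if n < c+1 then 0 else phi c \<theta> (n-(c+1)))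
     - (if n < 2 then 0 else phi c \<theta> (n-2)) + (1+\<theta>) * (if n = 0 then 0 else phi c \<theta> (n-1))
     - \<theta> * phi c \<theta> n = ((1 - \<theta>) * (real c + 1) - 1) * (if n = 2 then 1 else 0)
     + (2 - (1 - \<theta>) * (real c + 1)) * (if n = 1 then 1 else 0)
     - (1 - \<theta>) * (if n = c + 1 then 1 else 0) - (if n = 0 then \<theta> else 0)"
  proof (cases n)
    case 0 then show ?thesis using c by simp
  next
    case (Suc m)
    show ?thesis
    proof (cases m)
      case 0 then show ?thesis using c th Suc by (simp add: field_simps)
    next
      case (Suc k)
      note nk = \<open>n = Suc m\<close> \<open>m = Suc k\<close>
      define e1 where "e1 = (if k + 1 < c then 1 else phi c \<theta> (k + 1 - c))"
      have h1: "\<theta> * phi c \<theta> (Suc (Suc k)) = phi c \<theta> (Suc k) - (1 - \<theta>) * e1"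
        using th by (simp add: e1_def)
      show ?thesis
      proof (cases k)
        case 0
        then show ?thesis using nk h1 c th unfolding e1_def
          by (cases "c = 1") (auto simp: field_simps)
      next
        case (Suc k')
        define e0 where "e0 = (if k < c then 1 else phi c \<theta> (k - c))"
        have h2: "\<theta> * phi c \<theta> (Suc k) = phi c \<theta> k - (1 - \<theta>) * e0"
          using th Suc by (simp add: e0_def)
        consider "k + 1 < c" | "k + 1 = c" | "k \<ge> c" by linarith
        then show ?thesis
        proof cases
          case 1
          then have "e0 = 1" "e1 = 1" by (simp_all add: e0_def e1_def)
          then show ?thesis using 1 nk h1 h2 \<open>k = Suc k'\<close> by (simp del: phi.simps add: algebra_simps)
        next
          case 2
          then have "e0 = 1" "e1 = 1" by (simp_all add: e0_def e1_def)
          moreover have "c - Suc 0 = k" using 2 by simp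
          ultimately show ?thesis using 2 nk h1 h2 \<open>k = Suc k'\<close> by (simp del: phi.simps add: algebra_simps phi.simps(1))
        next
          case 3
          then have "e0 = phi c \<theta> (k - c)" "e1 = phi c \<theta> (k + 1 - c)" by (simp_all add: e0_def e1_def)
          then show ?thesis using 3 nk h1 h2 \<open>k = Suc k'\<close> by (simp del: phi.simps add: algebra_simps)
        qed
      qed
    qed
  qed
  then have "fps_nth (A * Df c \<theta>) n = fps_nth (Nf c \<theta>) n" using L R by simp
  then show "fps_nth (Abs_fps (phi c \<theta>) * Df c \<theta>) n = fps_nth (Nf c \<theta>) n"
    by (simp add: A_def)
qed


lemma xi_exp:
  assumes c: "c > 0" and th: "\<theta> > 0"
  shows "xi c \<theta> has_fps_expansion Abs_fps (phi c \<theta>)"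
proof -
  have "(\<lambda>w. (((1 - \<theta>) * (real c + 1) - 1) * w^2 + (2 - (1 - \<theta>) * (real c + 1)) * w - (1 - \<theta>) * w^(c+1) - \<theta>) /
    ((1 - \<theta>) * w^(c+2) - (1 - \<theta>) * w^(c+1) - w^2 + (1 + \<theta>) * w - \<theta>)) has_fps_expansion (Nf c \<theta> / Df c \<theta>)"
    using th by (intro has_fps_expansion_divide' N_exp D_exp) (simp add: Df_def)
  moreover have "xi c \<theta> = (\<lambda>w. (((1 - \<theta>) * (real c + 1) - 1) * w^2 + (2 - (1 - \<theta>) * (real c + 1)) * w - (1 - \<theta>) * w^(c+1) - \<theta>) /
    ((1 - \<theta>) * w^(c+2) - (1 - \<theta>) * w^(c+1) - w^2 + (1 + \<theta>) * w - \<theta>))"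
    by (rule ext) (simp add: xi_def)
  moreover have "Df c \<theta> \<noteq> 0"
  proof
    assume "Df c \<theta> = 0"
    then have "fps_nth (Df c \<theta>) 0 = 0" by simp
    then show False using th by (simp add: Df_def)
  qed
  then have "Nf c \<theta> / Df c \<theta> = Abs_fps (phi c \<theta>)"
    using coeff_id[OF c th] by (metis nonzero_mult_div_cancel_right)
  ultimately show ?thesis by simp
qed

theorem lemma3p5:
  fixes c :: nat and \<theta> :: real
  assumes "c > 0" and "real c / (real c + 1) \<le> \<theta>" and "\<theta> < 1"
  shows "(\<forall>u::nat. rw_pi (int u) c 1 \<theta> = (deriv ^^ u) (xi c \<theta>) 0 / fact u)
       \<and> (\<forall>\<alpha> \<beta> :: nat. \<alpha> > 0 \<longrightarrow> \<beta> > 0 \<longrightarrow>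
            p_quit c 1 \<alpha> \<beta> \<theta> = rw_pi (int \<alpha> - int c * int \<beta> + 1) c 1 \<theta>)"
proof
  have c: "c > 0" by fact
  have "real c \<le> \<theta> * (real c + 1)" using assms(2) by (simp add: divide_le_eq)
  then have drift: "(1 - \<theta>) * real c \<le> \<theta>" by (simp add: algebra_simps)
  have th0: "\<theta> > 0"
  proof -
    have "0 < real c / (real c + 1)" using c by simp
    then show ?thesis using assms(2) by linarith
  qed
  have th1: "\<theta> < 1" by fact
  have f1: "rw_pi 1 c 1 \<theta> \<le> Phi c \<theta> 1"
    using th0 th1 by (intro minimality Phi_nonneg[OF c] Phi_le0 Phi_rec) auto
  have eq: "rw_pi u c 1 \<theta> = Phi c \<theta> u" for u
    using th0 th1 by (intro uniqueness[OF c th0 th1 drift] rw_pi_bounds rw_pi_le0 rw_pi_rec f1) auto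
  show "\<forall>u::nat. rw_pi (int u) c 1 \<theta> = (deriv ^^ u) (xi c \<theta>) 0 / fact u"
  proof
    fix u :: nat
    have "rw_pi (int u) c 1 \<theta> = phi c \<theta> u" using eq[of "int u"] Phi_nat[of c \<theta> u] by simp
    also have "\<dots> = fps_nth (Abs_fps (phi c \<theta>)) u" by simp
    also have "\<dots> = (deriv ^^ u) (xi c \<theta>) 0 / fact u"
      by (rule fps_nth_fps_expansion_real[OF xi_exp[OF c th0]])
    finally show "rw_pi (int u) c 1 \<theta> = (deriv ^^ u) (xi c \<theta>) 0 / fact u" .
  qed
  show "\<forall>\<alpha> \<beta> :: nat. \<alpha> > 0 \<longrightarrow> \<beta> > 0 \<longrightarrow>
            p_quit c 1 \<alpha> \<beta> \<theta> = rw_pi (int \<alpha> - int c * int \<beta> + 1) c 1 \<theta>"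
    using part2 by blast
qed

end
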